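(* Let $f:[0,\infty)\to(0,\infty)$ be continuous and non-increasing with $\lim_{u\to\infty}f(au)/f(u)=0$ for all $a>1$ and $\int_{\mathbb R^k}f(u'u)\,du<\infty$. For $c>0$ let $\pi_{\eta,c}(\eta\mid\theta)=f(\tfrac1c\eta'W(P)\eta)/Z_c(P)$ with $Z_c(P)=\int f(\tfrac1c\eta'W(P)\eta)\,d\eta$. Let $\pi^*_\eta(\eta\mid\theta)$ be any conditional probability density on $\mathbb R^k$ that is strictly positive, let $\phi\in(0,1)$, and define the mixture \[ \pi^\phi_{\eta,c}(\eta\mid\theta)=(1-\phi)\pi_{\eta,c}(\eta\mid\theta)+\phi\,\pi^*_\eta(\eta\mid\theta). \] Given a prior density $\pi_\theta$ on $\mathbb R^p$, let \[ \pi_c^\phi(\theta\mid P)=\frac{\pi_\theta(\theta)\,\pi^\phi_{\eta,c}(Y(P)-X(P)\theta\mid\theta)}{\int\pi_\theta(\vartheta)\,\pi^\phi_{\eta,c}(Y(P)-X(P)\vartheta\mid\vartheta)\,d\vartheta}. \] (1) If $J_W(P)>0$, then for any $\pi_\theta$ and every $\theta$, \[ \lim_{c\to0}\pi^\phi_c(\theta\mid P)=\frac{\pi_\theta(\theta)\,\pi^*_\eta(Y(P)-X(P)\theta\mid\theta)}{\int\pi_\theta(\vartheta)\,\pi^*_\eta(Y(P)-X(P)\vartheta\mid\vartheta)\,d\vartheta}. \] (2) If instead $J_W(P)=0$, $\pi_\theta$ is continuous and $\pi_\theta(\theta_W(P))>0$, then for every $\varepsilon>0$, \[ \lim_{c\to0}\int1\{\|\theta-\theta_W(P)\|\ge\varepsilon\}\,d\pi^\phi_c(\theta\mid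 P)=0. \]
   Context: Let $\mathcal P$ be a set of probability distributions; $P\in\mathcal P$ is observed. Fix integers $k>p\ge1$. $Y(P)\in\mathbb R^k$, $X(P)\in\mathbb R^{k\times p}$ of full column rank, and a symmetric positive definite $k\times k$ matrix $W(P)$ are known. Define $Q_W(\theta;P)=(Y(P)-X(P)\theta)'W(P)(Y(P)-X(P)\theta)$, the population $J$-statistic $J_W(P)=\min_\theta Q_W(\theta;P)$, and the pseudo-true value $\theta_W(P)=(X(P)'W(P)X(P))^{-1}X(P)'W(P)Y(P)$. Here $\eta=Y(P)-X(P)\theta$ is the misspecification parameter, and $\pi^\phi_c(\cdot\mid P)$ is the posterior for $\theta$ under prior $\pi_\theta$ on $\theta$ and conditional prior $\pi^\phi_{\eta,c}$ on $\eta$. *)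

theory Defs
  imports "HOL-Analysis.Analysis"
begin

definition QW :: "real^'k^'k \<Rightarrow> real^'p^'k \<Rightarrow> real^'k \<Rightarrow> real^'p \<Rightarrow> real" where
  "QW W X Y \<theta> = (Y - X *v \<theta>) \<bullet> (W *v (Y - X *v \<theta>))"

definition JW :: "real^'k^'k \<Rightarrow> real^'p^'k \<Rightarrow> real^'k \<Rightarrow> real" where
  "JW W X Y = (INF \<theta>. QW W X Y \<theta>)"

definition thetaW :: "real^'k^'k \<Rightarrow> real^'p^'k \<Rightarrow> real^'k \<Rightarrow> real^'p" where
  "thetaW W X Y = matrix_inv (transpose X ** W ** X) *v (transpose X *v (W *v Y))"

definition Zc :: "(real \<Rightarrow> real) \<Rightarrow> real^'k^'k \<Rightarrow> real \<Rightarrow> real" where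
  "Zc f W c = (\<integral>\<eta>. f ((1 / c) * (\<eta> \<bullet> (W *v \<eta>))) \<partial>lborel)"

definition pi_eta :: "(real \<Rightarrow> real) \<Rightarrow> real^'k^'k \<Rightarrow> real \<Rightarrow> real^'k \<Rightarrow> real" where
  "pi_eta f W c \<eta> = f ((1 / c) * (\<eta> \<bullet> (W *v \<eta>))) / Zc f W c"

definition pi_eta_mix ::
  "(real \<Rightarrow> real) \<Rightarrow> real^'k^'k \<Rightarrow> (real^'p \<Rightarrow> real^'k \<Rightarrow> real) \<Rightarrow> real \<Rightarrow> real
     \<Rightarrow> real^'p \<Rightarrow> real^'k \<Rightarrow> real" where
  "pi_eta_mix f W pistar \<phi> c \<theta> \<eta> = (1 - \<phi>) * pi_eta f W c \<eta> + \<phi> * pistar \<theta> \<eta>"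

definition posterior ::
  "(real^'p \<Rightarrow> real) \<Rightarrow> (real^'p \<Rightarrow> real^'k \<Rightarrow> real) \<Rightarrow> real^'p^'k \<Rightarrow> real^'k \<Rightarrow> real^'p \<Rightarrow> real" where
  "posterior pitheta pieta X Y \<theta> =
     pitheta \<theta> * pieta \<theta> (Y - X *v \<theta>) /
       (\<integral>t. pitheta t * pieta t (Y - X *v t) \<partial>lborel)"

definition post_c ::
  "(real \<Rightarrow> real) \<Rightarrow> real^'k^'k \<Rightarrow> (real^'p \<Rightarrow> real^'k \<Rightarrow> real) \<Rightarrow> real \<Rightarrow> (real^'p \<Rightarrow> real)
     \<Rightarrow> real^'p^'k \<Rightarrow> real^'k \<Rightarrow> real \<Rightarrow> real^'p \<Rightarrow> real" where
  "post_c f W pistar \<phi> pitheta X Y c = posterior pitheta (pi_eta_mix f W pistar \<phi> c) X Y"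

end

theory Submission
  imports Defs
begin


lemma quad_nonneg:
  fixes W :: "real^'n^'n"
  assumes "\<And>x. x \<noteq> 0 \<Longrightarrow> x \<bullet> (W *v x) > 0"
  shows "x \<bullet> (W *v x) \<ge> 0"
  using assms[of x] by (cases "x = 0") auto

lemma quad_homog:
  fixes W :: "real^'n^'n"
  shows "(r *\<^sub>R x) \<bullet> (W *v (r *\<^sub>R x)) = r^2 * (x \<bullet> (W *v x))"
  by (simp add: matrix_vector_mult_scaleR power2_eq_square)

lemma quad_cont:
  fixes W :: "real^'n^'n"
  shows "continuous_on S (\<lambda>x. x \<bullet> (W *v x))"
  by (intro continuous_intros linear_continuous_on matrix_vector_mul_bounded_linear)

lemma quad_lower:
  fixes W :: "real^'n^'n"
  assumes pd: "\<And>x. x \<noteq> 0 \<Longrightarrow> x \<bullet> (W *v x) > 0"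
  shows "\<exists>l>0. \<forall>x. l * (x \<bullet> x) \<le> x \<bullet> (W *v x)"
proof -
  have ne: "sphere (0::real^'n) 1 \<noteq> {}" by simp
  obtain x0 where x0: "x0 \<in> sphere 0 1" and mn: "\<And>y. y \<in> sphere 0 1 \<Longrightarrow> x0 \<bullet> (W *v x0) \<le> y \<bullet> (W *v y)"
    using continuous_attains_inf[OF compact_sphere ne quad_cont] by blast
  define l where "l = x0 \<bullet> (W *v x0)"
  have "x0 \<noteq> 0" using x0 by auto
  hence lpos: "l > 0" using pd l_def by auto
  have "l * (x \<bullet> x) \<le> x \<bullet> (W *v x)" for x
  proof (cases "x = 0")
    case True thus ?thesis by simp
  next
    case False
    define u where "u = (1 / norm x) *\<^sub>R x"
    have u: "u \<in> sphere 0 1" using False by (simp add: u_def)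
    have xu: "x = norm x *\<^sub>R u" using False by (simp add: u_def)
    have "x \<bullet> (W *v x) = (norm x)^2 * (u \<bullet> (W *v u))"
      by (subst xu, subst (2) xu, rule quad_homog)
    moreover have "l \<le> u \<bullet> (W *v u)" using mn[OF u] l_def by simp
    moreover have "x \<bullet> x = (norm x)^2" by (simp add: power2_norm_eq_inner)
    ultimately show ?thesis by (simp add: mult.commute mult_right_mono)
  qed
  thus ?thesis using lpos by blast
qed

lemma quad_upper:
  fixes W :: "real^'n^'n"
  shows "\<exists>K>0. \<forall>x. x \<bullet> (W *v x) \<le> K * (x \<bullet> x)"
proof -
  obtain K where K: "K > 0" "\<And>x. norm (W *v x) \<le> norm x * K"
    using bounded_linear.pos_bounded[OF matrix_vector_mul_bounded_linear[of W]] by blast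
  have "x \<bullet> (W *v x) \<le> K * (x \<bullet> x)" for x
  proof -
    have "x \<bullet> (W *v x) \<le> norm x * norm (W *v x)" by (rule norm_cauchy_schwarz)
    also have "\<dots> \<le> norm x * (norm x * K)" by (rule mult_left_mono[OF K(2)]) simp
    also have "\<dots> = K * (x \<bullet> x)" by (simp add: power2_norm_eq_inner[symmetric] power2_eq_square)
    finally show ?thesis .
  qed
  thus ?thesis using K by blast
qed



lemma nn_ball_lower:
  fixes h :: "real^'n \<Rightarrow> real"
  assumes "\<And>u. u \<in> ball c r \<Longrightarrow> a \<le> h u" "\<And>u. 0 \<le> h u" "a \<ge> 0" "r \<ge> 0"
  shows "ennreal (a * (unit_ball_vol (real CARD('n)) * r ^ CARD('n))) \<le> (\<integral>\<^sup>+u. ennreal (h u) \<partial>lborel)"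
proof -
  have "(\<integral>\<^sup>+u. ennreal a * indicator (ball c r) u \<partial>lborel) \<le> (\<integral>\<^sup>+u. ennreal (h u) \<partial>lborel)"
    by (intro nn_integral_mono) (auto simp: indicator_def assms)
  moreover have "(\<integral>\<^sup>+u. ennreal a * indicator (ball c r) u \<partial>lborel) = ennreal a * emeasure lborel (ball c r)"
    by (rule nn_integral_cmult_indicator) simp
  moreover have "ennreal a * emeasure lborel (ball c r) = ennreal (a * (unit_ball_vol (real CARD('n)) * r ^ CARD('n)))"
    using assms by (simp add: emeasure_ball ennreal_mult)
  ultimately show ?thesis by simp
qed

lemma int_ball_lower:
  fixes h :: "real^'n \<Rightarrow> real"
  assumes "\<And>u. u \<in> ball c r \<Longrightarrow> a \<le> h u" "\<And>u. 0 \<le> h u" "a \<ge> 0" "r \<ge> 0"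
    and int: "integrable lborel h"
  shows "a * (unit_ball_vol (real CARD('n)) * r ^ CARD('n)) \<le> integral\<^sup>L lborel h"
proof -
  have fin: "(\<integral>\<^sup>+u. ennreal (h u) \<partial>lborel) < \<infinity>"
    using int assms(2) by (simp add: integrable_iff_bounded)
  have "integral\<^sup>L lborel h = enn2real (\<integral>\<^sup>+u. ennreal (h u) \<partial>lborel)"
    using int assms(2) by (intro integral_eq_nn_integral) auto
  moreover have "enn2real (ennreal (a * (unit_ball_vol (real CARD('n)) * r ^ CARD('n)))) \<le> enn2real (\<integral>\<^sup>+u. ennreal (h u) \<partial>lborel)"
  proof -
    have "ennreal (a * (unit_ball_vol (real CARD('n)) * r ^ CARD('n))) \<le> (\<integral>\<^sup>+u. ennreal (h u) \<partial>lborel)"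
      by (rule nn_ball_lower) (use assms in auto)
    thus ?thesis using fin enn2real_mono by (metis infinity_ennreal_def)
  qed
  ultimately show ?thesis using assms by simp
qed

lemma f_decay:
  fixes f :: "real \<Rightarrow> real"
  assumes noninc: "\<And>u v. 0 \<le> u \<Longrightarrow> u \<le> v \<Longrightarrow> f v \<le> f u"
    and pos: "\<And>u. u \<ge> 0 \<Longrightarrow> f u > 0"
    and fin: "(\<integral>\<^sup>+ u. ennreal (f (u \<bullet> u)) \<partial>(lborel :: (real^'n) measure)) < \<infinity>"
    and s: "s > 0"
  shows "f s \<le> enn2real (\<integral>\<^sup>+ u. ennreal (f (u \<bullet> u)) \<partial>(lborel :: (real^'n) measure))
                 / (unit_ball_vol (real CARD('n)) * sqrt s ^ CARD('n))"
proof -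
  let ?I = "(\<integral>\<^sup>+ u. ennreal (f (u \<bullet> u)) \<partial>(lborel :: (real^'n) measure))"
  have "ennreal (f s * (unit_ball_vol (real CARD('n)) * sqrt s ^ CARD('n))) \<le> ?I"
  proof (rule nn_ball_lower)
    fix u :: "real^'n" assume "u \<in> ball 0 (sqrt s)"
    hence "norm u < sqrt s" by simp
    hence "(norm u)^2 < (sqrt s)^2" by (intro power_strict_mono) auto
    hence "u \<bullet> u \<le> s" using s by (simp add: power2_norm_eq_inner)
    thus "f s \<le> f (u \<bullet> u)" by (intro noninc) auto
  qed (use pos s in \<open>auto intro: less_imp_le\<close>)
  hence "enn2real (ennreal (f s * (unit_ball_vol (real CARD('n)) * sqrt s ^ CARD('n)))) \<le> enn2real ?I"
    using fin enn2real_mono by (metis infinity_ennreal_def)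
  hence "f s * (unit_ball_vol (real CARD('n)) * sqrt s ^ CARD('n)) \<le> enn2real ?I"
    using pos[of s] s by simp
  moreover have "unit_ball_vol (real CARD('n)) * sqrt s ^ CARD('n) > 0" using s by simp
  ultimately show ?thesis by (simp add: pos_le_divide_eq)
qed

lemma nn_scale:
  fixes g :: "real^'n \<Rightarrow> ennreal"
  assumes g: "g \<in> borel_measurable borel" and s: "s > 0"
  shows "(\<integral>\<^sup>+x. g x \<partial>lborel) = ennreal (s ^ CARD('n)) * (\<integral>\<^sup>+x. g (s *\<^sub>R x) \<partial>lborel)"
proof -
  have eq: "(lborel :: (real^'n) measure) = density (distr lborel borel (\<lambda>x. 0 + s *\<^sub>R x)) (\<lambda>_. \<bar>s\<bar>^DIM(real^'n))"
    using s by (intro lborel_affine) simp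
  have "(\<integral>\<^sup>+x. g x \<partial>lborel) = (\<integral>\<^sup>+x. g x \<partial>(density (distr lborel borel (\<lambda>x. 0 + s *\<^sub>R x)) (\<lambda>_. \<bar>s\<bar>^DIM(real^'n))))"
    by (simp only: eq[symmetric])
  also have "\<dots> = (\<integral>\<^sup>+x. ennreal (\<bar>s\<bar>^DIM(real^'n)) * g x \<partial>(distr lborel borel (\<lambda>x. 0 + s *\<^sub>R x)))"
    using g by (subst nn_integral_density) auto
  also have "\<dots> = (\<integral>\<^sup>+x. ennreal (\<bar>s\<bar>^DIM(real^'n)) * g (0 + s *\<^sub>R x) \<partial>lborel)"
    using g by (subst nn_integral_distr) auto
  also have "\<dots> = ennreal (s ^ CARD('n)) * (\<integral>\<^sup>+x. g (s *\<^sub>R x) \<partial>lborel)"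
    using s g by (subst nn_integral_cmult) auto
  finally show ?thesis .
qed



lemma fcomp_cont:
  fixes g :: "'a::topological_space \<Rightarrow> real"
  assumes f_cont: "continuous_on {0..} f" and g: "continuous_on UNIV g" and gn: "\<And>x. g x \<ge> 0"
  shows "continuous_on UNIV (\<lambda>x. f (g x))"
  by (rule continuous_on_compose2[OF f_cont g]) (use gn in auto)

lemma Zc_facts:
  fixes W :: "real^'k^'k" and f :: "real \<Rightarrow> real"
  assumes pd: "\<And>x. x \<noteq> 0 \<Longrightarrow> x \<bullet> (W *v x) > 0"
    and f_cont: "continuous_on {0..} f"
    and noninc: "\<And>u v. 0 \<le> u \<Longrightarrow> u \<le> v \<Longrightarrow> f v \<le> f u"
    and pos: "\<And>u. u \<ge> 0 \<Longrightarrow> f u > 0"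
    and fin: "(\<integral>\<^sup>+ u. ennreal (f (u \<bullet> u)) \<partial>(lborel :: (real^'k) measure)) < \<infinity>"
    and l: "l > 0" "\<And>x. l * (x \<bullet> x) \<le> x \<bullet> (W *v x)"
    and K: "K > 0" "\<And>x. x \<bullet> (W *v x) \<le> K * (x \<bullet> x)"
    and c: "c > 0"
  shows "integrable lborel (\<lambda>\<eta>. f ((1 / c) * (\<eta> \<bullet> (W *v \<eta>))))"
    and "Zc f W c \<le> sqrt (c / l) ^ CARD('k) * enn2real (\<integral>\<^sup>+ u. ennreal (f (u \<bullet> u)) \<partial>(lborel :: (real^'k) measure))"
    and "f K * (unit_ball_vol (real CARD('k)) * sqrt c ^ CARD('k)) \<le> Zc f W c"
    and "0 < Zc f W c"
proof -
  let ?I = "(\<integral>\<^sup>+ u. ennreal (f (u \<bullet> u)) \<partial>(lborel :: (real^'k) measure))"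
  define h where "h = (\<lambda>\<eta>::real^'k. f ((1 / c) * (\<eta> \<bullet> (W *v \<eta>))))"
  define h2 where "h2 = (\<lambda>\<eta>::real^'k. f ((l / c) * (\<eta> \<bullet> \<eta>)))"
  define s where "s = sqrt (c / l)"
  have s: "s > 0" "(l / c) * s^2 = 1" using l c by (auto simp: s_def)
  have qn: "\<And>x. x \<bullet> (W *v x) \<ge> 0" using quad_nonneg[OF pd] .
  have hc: "continuous_on UNIV h" unfolding h_def
    by (rule fcomp_cont[OF f_cont]) (use c qn in \<open>auto intro!: continuous_intros quad_cont\<close>)
  have h2c: "continuous_on UNIV h2" unfolding h2_def
    by (rule fcomp_cont[OF f_cont]) (use l c in \<open>auto intro!: continuous_intros\<close>)
  have hm: "h \<in> borel_measurable borel" using hc by (rule borel_measurable_continuous_onI)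
  have h2m: "h2 \<in> borel_measurable borel" using h2c by (rule borel_measurable_continuous_onI)
  have hpos: "h x > 0" for x unfolding h_def using qn c by (intro pos) auto
  have hle: "h x \<le> h2 x" for x unfolding h_def h2_def
  proof (rule noninc)
    show "0 \<le> l / c * (x \<bullet> x)" using l c by auto
    show "l / c * (x \<bullet> x) \<le> 1 / c * (x \<bullet> (W *v x))" using l(2)[of x] c
      by (simp add: divide_right_mono)
  qed
  have "(\<integral>\<^sup>+x. ennreal (h2 x) \<partial>lborel) = ennreal (s ^ CARD('k)) * (\<integral>\<^sup>+x. ennreal (h2 (s *\<^sub>R x)) \<partial>lborel)"
    by (rule nn_scale) (use h2m s in auto)
  also have "(\<lambda>x. h2 (s *\<^sub>R x)) = (\<lambda>x. f (x \<bullet> x))"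
  proof
    fix x :: "real^'k"
    have "l / c * ((s *\<^sub>R x) \<bullet> (s *\<^sub>R x)) = ((l / c) * s^2) * (x \<bullet> x)"
      by (simp add: power2_eq_square)
    thus "h2 (s *\<^sub>R x) = f (x \<bullet> x)" unfolding h2_def using s(2) by (simp only:) simp
  qed
  finally have I2: "(\<integral>\<^sup>+x. ennreal (h2 x) \<partial>lborel) = ennreal (s ^ CARD('k)) * ?I" .
  have le: "(\<integral>\<^sup>+x. ennreal (h x) \<partial>lborel) \<le> (\<integral>\<^sup>+x. ennreal (h2 x) \<partial>lborel)"
    by (intro nn_integral_mono ennreal_leI hle)
  have fin2: "(\<integral>\<^sup>+x. ennreal (h2 x) \<partial>lborel) < \<infinity>"
    unfolding I2 using fin by (simp add: ennreal_mult_less_top)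
  have finh: "(\<integral>\<^sup>+x. ennreal (h x) \<partial>lborel) < \<infinity>" using le fin2 by (meson le_less_trans)
  show int: "integrable lborel (\<lambda>\<eta>. f ((1 / c) * (\<eta> \<bullet> (W *v \<eta>))))"
    unfolding h_def[symmetric]
    by (rule integrableI_bounded) (use hm finh hpos in \<open>auto simp: less_imp_le\<close>)
  have Zeq: "Zc f W c = enn2real (\<integral>\<^sup>+x. ennreal (h x) \<partial>lborel)"
    unfolding Zc_def h_def[symmetric] using hm hpos by (intro integral_eq_nn_integral) (auto simp: less_imp_le)
  have "enn2real (\<integral>\<^sup>+x. ennreal (h x) \<partial>lborel) \<le> enn2real (\<integral>\<^sup>+x. ennreal (h2 x) \<partial>lborel)"
    using le fin2 enn2real_mono by (metis infinity_ennreal_def)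
  also have "\<dots> = s ^ CARD('k) * enn2real ?I" unfolding I2 using s
    by (simp add: enn2real_mult)
  finally show "Zc f W c \<le> sqrt (c / l) ^ CARD('k) * enn2real ?I" using Zeq s_def by simp
  have "f K * (unit_ball_vol (real CARD('k)) * sqrt c ^ CARD('k)) \<le> integral\<^sup>L lborel h"
  proof (rule int_ball_lower)
    fix u :: "real^'k" assume "u \<in> ball 0 (sqrt c)"
    hence "norm u < sqrt c" by simp
    hence "(norm u)^2 < (sqrt c)^2" by (intro power_strict_mono) auto
    hence uu: "u \<bullet> u \<le> c" using c by (simp add: power2_norm_eq_inner)
    have "u \<bullet> (W *v u) \<le> K * c" using K(2)[of u] uu K(1)
      by (meson mult_left_mono less_imp_le order_trans)
    hence "1 / c * (u \<bullet> (W *v u)) \<le> K" using c by (simp add: divide_le_eq mult.commute)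
    thus "f K \<le> h u" unfolding h_def using qn c by (intro noninc) auto
  qed (use hpos K pos c int[folded h_def] in \<open>auto intro: less_imp_le\<close>)
  thus "f K * (unit_ball_vol (real CARD('k)) * sqrt c ^ CARD('k)) \<le> Zc f W c"
    unfolding Zc_def h_def .
  moreover have "0 < f K * (unit_ball_vol (real CARD('k)) * sqrt c ^ CARD('k))"
    using pos[of K] K c by simp
  ultimately show "0 < Zc f W c" by linarith
qed



lemma quadXWX:
  fixes X :: "real^'p^'k" and W :: "real^'k^'k"
  shows "v \<bullet> ((transpose X ** W ** X) *v v) = (X *v v) \<bullet> (W *v (X *v v))"
proof -
  have "(transpose X ** W ** X) *v v = transpose X *v (W *v (X *v v))"
    by (simp add: matrix_vector_mul_assoc[symmetric])
  also have "v \<bullet> (transpose X *v (W *v (X *v v))) = (X *v v) \<bullet> (W *v (X *v v))"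
    by (simp only: transpose_matrix_vector) (metis dot_lmul_matrix inner_commute)
  finally show ?thesis by simp
qed

lemma XWX_pd:
  fixes X :: "real^'p^'k" and W :: "real^'k^'k"
  assumes pd: "\<And>x. x \<noteq> 0 \<Longrightarrow> x \<bullet> (W *v x) > 0" and inj: "inj ((*v) X)"
  shows "v \<noteq> 0 \<Longrightarrow> v \<bullet> ((transpose X ** W ** X) *v v) > 0"
proof -
  assume v: "v \<noteq> 0"
  have "X *v v \<noteq> 0" using inj v by (metis injD matrix_vector_mult_0_right)
  thus ?thesis using pd by (simp add: quadXWX)
qed

lemma J0_fit:
  fixes X :: "real^'p^'k" and W :: "real^'k^'k"
  assumes pd: "\<And>x. x \<noteq> 0 \<Longrightarrow> x \<bullet> (W *v x) > 0" and inj: "inj ((*v) X)"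
    and J: "JW W X Y = 0"
  shows "Y = X *v thetaW W X Y"
proof -
  obtain l where l: "l > 0" "\<And>x. l * (x \<bullet> x) \<le> x \<bullet> (W *v x)" using quad_lower[OF pd] by blast
  let ?R = "range ((*v) X)"
  have sub: "subspace ?R" by (intro linear_subspace_image subspace_UNIV) simp
  have cl: "closed ?R" by (rule closed_subspace[OF sub])
  have "Y \<in> ?R"
  proof (rule ccontr)
    assume nY: "Y \<notin> ?R"
    have d: "infdist Y ?R > 0" by (rule infdist_pos_not_in_closed[OF cl _ nY]) auto
    have "l * (infdist Y ?R)^2 \<le> QW W X Y t" for t
    proof -
      have "infdist Y ?R \<le> dist Y (X *v t)" by (intro infdist_le) auto
      hence "(infdist Y ?R)^2 \<le> (norm (Y - X *v t))^2"
        using d by (intro power_mono) (auto simp: dist_norm)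
      also have "\<dots> = (Y - X *v t) \<bullet> (Y - X *v t)" by (simp add: power2_norm_eq_inner)
      finally have "l * (infdist Y ?R)^2 \<le> l * ((Y - X *v t) \<bullet> (Y - X *v t))"
        using l by simp
      also have "\<dots> \<le> QW W X Y t" unfolding QW_def by (rule l(2))
      finally show ?thesis .
    qed
    hence "l * (infdist Y ?R)^2 \<le> JW W X Y" unfolding JW_def by (intro cINF_greatest) auto
    moreover have "l * (infdist Y ?R)^2 > 0" using l d by simp
    ultimately show False using J by linarith
  qed
  then obtain t0 where t0: "Y = X *v t0" by blast
  define A where "A = transpose X ** W ** X"
  have "inj ((*v) A)"
  proof (rule injI)
    fix u v assume "A *v u = A *v v"
    hence "A *v (u - v) = 0" by (simp add: matrix_vector_mult_diff_distrib)
    hence "(u - v) \<bullet> (A *v (u - v)) = 0" by simp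
    thus "u = v" using XWX_pd[OF pd inj, of "u - v"] unfolding A_def by fastforce
  qed
  hence "invertible A" by (simp add: invertible_left_inverse matrix_left_invertible_injective)
  hence "matrix_inv A ** A = mat 1"
    unfolding matrix_inv_def invertible_def by (rule someI_ex[where P="\<lambda>B. A ** B = mat 1 \<and> B ** A = mat 1", THEN conjunct2])
  moreover have "transpose X *v (W *v (X *v t0)) = A *v t0"
    unfolding A_def by (simp add: matrix_vector_mul_assoc[symmetric])
  ultimately have "thetaW W X Y = t0"
    unfolding thetaW_def t0 A_def[symmetric]
    by (simp add: matrix_vector_mul_assoc)
  thus ?thesis using t0 by simp
qed



lemma decay_fast:
  fixes f :: "real \<Rightarrow> real"
  assumes noninc: "\<And>u v. 0 \<le> u \<Longrightarrow> u \<le> v \<Longrightarrow> f v \<le> f u"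
    and pos: "\<And>u. u \<ge> 0 \<Longrightarrow> f u > 0"
    and fin: "(\<integral>\<^sup>+ u. ennreal (f (u \<bullet> u)) \<partial>(lborel :: (real^'n) measure)) < \<infinity>"
    and tail: "((\<lambda>u. f (2 * u) / f u) \<longlongrightarrow> 0) at_top"
    and J: "J > 0"
  shows "((\<lambda>c. f (J / c) / sqrt c ^ CARD('n)) \<longlongrightarrow> 0) (at_right 0)"
proof -
  let ?I = "enn2real (\<integral>\<^sup>+ u. ennreal (f (u \<bullet> u)) \<partial>(lborel :: (real^'n) measure))"
  let ?V = "unit_ball_vol (real CARD('n))"
  define C where "C = ?I / (?V * sqrt (J / 2) ^ CARD('n))"
  define r where "r = (\<lambda>c::real. f (2 * (J / (2 * c))) / f (J / (2 * c)))"
  have lim: "filterlim (\<lambda>c::real. J / (2 * c)) at_top (at_right 0)"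
  proof -
    have "filterlim (\<lambda>c::real. (J / 2) * inverse c) at_top (at_right 0)"
      using filterlim_tendsto_pos_mult_at_top[of "\<lambda>_. J / 2" "J / 2" "at_right (0::real)" inverse, OF tendsto_const _ filterlim_inverse_at_top_right] J by simp
    moreover have "(\<lambda>c::real. (J / 2) * inverse c) = (\<lambda>c. J / (2 * c))"
      by (rule ext) (simp add: field_simps)
    ultimately show ?thesis by simp
  qed
  have r0: "(r \<longlongrightarrow> 0) (at_right 0)" unfolding r_def
    using filterlim_compose[OF tail lim] by simp
  have T1: "((\<lambda>c. C * r c) \<longlongrightarrow> 0) (at_right 0)" by (rule tendsto_mult_right_zero[OF r0])
  have E1: "eventually (\<lambda>c. 0 \<le> f (J / c) / sqrt c ^ CARD('n)) (at_right 0)"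
    using eventually_at_right_less[of "0::real"]
  proof eventually_elim
    case (elim c)
    have "0 < f (J / c)" using J elim by (intro pos) simp
    thus ?case using elim by simp
  qed
  have E2: "eventually (\<lambda>c. f (J / c) / sqrt c ^ CARD('n) \<le> C * r c) (at_right 0)"
    using eventually_at_right_less[of "0::real"]
  proof eventually_elim
    case (elim c)
    have c: "c > 0" using elim .
    have p2: "f (J / (2 * c)) > 0" using J c by (intro pos) simp
    have p1: "f (2 * (J / (2 * c))) > 0" using J c by (intro pos) simp
    have rc: "r c \<ge> 0" unfolding r_def using p1 p2 by simp
    have "2 * (J / (2 * c)) = J / c" by simp
    hence eq: "f (J / c) = r c * f (J / (2 * c))" unfolding r_def using p2 by simp
    have Jc: "0 < J / (2 * c)" using J c by simp
    have dec: "f (J / (2 * c)) \<le> ?I / (?V * sqrt (J / (2 * c)) ^ CARD('n))"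
      by (rule f_decay[OF noninc pos fin Jc])
    have sq: "sqrt (J / (2 * c)) ^ CARD('n) * sqrt c ^ CARD('n) = sqrt (J / 2) ^ CARD('n)"
    proof -
      have "sqrt (J / (2 * c)) * sqrt c = sqrt (J / (2 * c) * c)"
        by (rule real_sqrt_mult[symmetric])
      also have "J / (2 * c) * c = J / 2" using c by simp
      finally have "sqrt (J / (2 * c)) * sqrt c = sqrt (J / 2)" .
      thus ?thesis by (simp add: power_mult_distrib[symmetric])
    qed
    have sc: "sqrt c ^ CARD('n) > 0" using c by simp
    have "f (J / c) / sqrt c ^ CARD('n) = r c * (f (J / (2 * c)) / sqrt c ^ CARD('n))" using eq by simp
    also have "\<dots> \<le> r c * (?I / (?V * sqrt (J / (2 * c)) ^ CARD('n)) / sqrt c ^ CARD('n))"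
      using dec sc rc by (intro mult_left_mono divide_right_mono) auto
    also have "?I / (?V * sqrt (J / (2 * c)) ^ CARD('n)) / sqrt c ^ CARD('n) = C"
    proof -
      have "?I / (?V * sqrt (J / (2 * c)) ^ CARD('n)) / sqrt c ^ CARD('n) = ?I / (?V * (sqrt (J / (2 * c)) ^ CARD('n) * sqrt c ^ CARD('n)))"
        by (simp add: divide_divide_eq_left mult.assoc)
      thus ?thesis unfolding C_def sq .
    qed
    finally show ?case by (simp add: mult.commute)
  qed
  show ?thesis by (rule tendsto_sandwich[OF E1 E2 tendsto_const T1])
qed

lemma ratio_bound:
  fixes num ZD L C1 x :: real
  assumes "0 \<le> num" "num \<le> C1 * x ^ n" "L * x ^ p \<le> ZD" "L > 0" "x > 0" "p < n"
  shows "num / ZD \<le> (C1 / L) * x ^ (n - p)"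
proof -
  have Lp: "L * x ^ p > 0" using assms by simp
  have "ZD > 0" using Lp assms(3) by linarith
  hence "num / ZD \<le> num / (L * x ^ p)" using assms(1,3) Lp by (intro divide_left_mono) (auto intro: mult_pos_pos)
  also have "\<dots> \<le> C1 * x ^ n / (L * x ^ p)" using assms Lp by (intro divide_right_mono) auto
  also have "x ^ n = x ^ (n - p) * x ^ p" using assms by (simp add: power_add[symmetric])
  hence "C1 * x ^ n / (L * x ^ p) = (C1 / L) * x ^ (n - p)" using Lp assms(5) by (simp add: field_simps)
  finally show ?thesis .
qed



theorem proposition4:
  fixes Y :: "real^'k" and X :: "real^'p^'k" and W :: "real^'k^'k"
    and f :: "real \<Rightarrow> real"
    and pistar :: "real^'p \<Rightarrow> real^'k \<Rightarrow> real"
    and pitheta :: "real^'p \<Rightarrow> real"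
    and \<phi> :: real
  assumes dims: "CARD('p) < CARD('k)"
    and X_rank: "rank X = CARD('p)"
    and W_sym: "transpose W = W"
    and W_pd: "\<And>x. x \<noteq> 0 \<Longrightarrow> x \<bullet> (W *v x) > 0"
    and f_cont: "continuous_on {0..} f"
    and f_pos: "\<And>u. u \<ge> 0 \<Longrightarrow> f u > 0"
    and f_noninc: "\<And>u v. 0 \<le> u \<Longrightarrow> u \<le> v \<Longrightarrow> f v \<le> f u"
    and f_tail: "\<And>a. a > 1 \<Longrightarrow> ((\<lambda>u. f (a * u) / f u) \<longlongrightarrow> 0) at_top"
    and f_int: "(\<integral>\<^sup>+ u. ennreal (f (u \<bullet> u)) \<partial>(lborel :: (real^'k) measure)) < \<infinity>"
    and pistar_pos: "\<And>\<theta> \<eta>. pistar \<theta> \<eta> > 0"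
    and pistar_meas: "\<And>\<theta>. pistar \<theta> \<in> borel_measurable lborel"
    and pistar_dens: "\<And>\<theta>. (\<integral>\<^sup>+ \<eta>. ennreal (pistar \<theta> \<eta>) \<partial>lborel) = 1"
    and phi: "0 < \<phi>" "\<phi> < 1"
    and pitheta_nonneg: "\<And>\<theta>. pitheta \<theta> \<ge> 0"
    and pitheta_meas: "pitheta \<in> borel_measurable lborel"
    and pitheta_dens: "(\<integral>\<^sup>+ \<theta>. ennreal (pitheta \<theta>) \<partial>lborel) = 1"
    and star_post_wd: "integrable lborel (\<lambda>t. pitheta t * pistar t (Y - X *v t))"
  shows
    "(JW W X Y > 0 \<longrightarrow>
        (\<forall>\<theta>. ((\<lambda>c. post_c f W pistar \<phi> pitheta X Y c \<theta>)
                 \<longlongrightarrow> posterior pitheta pistar X Y \<theta>) (at_right 0)))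
     \<and> (JW W X Y = 0 \<and> continuous_on UNIV pitheta \<and> pitheta (thetaW W X Y) > 0 \<longrightarrow>
        (\<forall>\<epsilon>>0. ((\<lambda>c. \<integral>\<theta>. indicator {\<theta>. norm (\<theta> - thetaW W X Y) \<ge> \<epsilon>} \<theta>
                                * post_c f W pistar \<phi> pitheta X Y c \<theta> \<partial>lborel)
                 \<longlongrightarrow> 0) (at_right 0)))"
proof -
  obtain l where l: "l > 0" "\<And>x. l * (x \<bullet> x) \<le> x \<bullet> (W *v x)" using quad_lower[OF W_pd] by blast
  obtain K where K: "K > 0" "\<And>x. x \<bullet> (W *v x) \<le> K * (x \<bullet> x)" using quad_upper[of W] by blast
  have Zf2: "Zc f W c \<le> sqrt (c / l) ^ CARD('k) * enn2real (\<integral>\<^sup>+ u. ennreal (f (u \<bullet> u)) \<partial>(lborel :: (real^'k) measure))"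
    if c: "c > 0" for c using Zc_facts(2)[of W f l K c] W_pd f_cont f_noninc f_pos f_int l K c by blast
  have Zf3: "f K * (unit_ball_vol (real CARD('k)) * sqrt c ^ CARD('k)) \<le> Zc f W c"
    if c: "c > 0" for c using Zc_facts(3)[of W f l K c] W_pd f_cont f_noninc f_pos f_int l K c by blast
  have Zf4: "0 < Zc f W c"
    if c: "c > 0" for c using Zc_facts(4)[of W f l K c] W_pd f_cont f_noninc f_pos f_int l K c by blast
  let ?V = "unit_ball_vol (real CARD('k))"
  let ?I = "enn2real (\<integral>\<^sup>+ u. ennreal (f (u \<bullet> u)) \<partial>(lborel :: (real^'k) measure))"
  define Q where "Q = QW W X Y"
  define P where "P = pitheta"
  define S where "S = (\<lambda>t. pistar t (Y - X *v t))"
  define h where "h = (\<lambda>c t. f ((1 / c) * Q t))"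
  define A where "A = (\<lambda>c. \<integral>t. P t * h c t \<partial>lborel)"
  define S0 where "S0 = (\<integral>t. P t * S t \<partial>lborel)"
  have qn: "\<And>x. x \<bullet> (W *v x) \<ge> 0" using quad_nonneg[OF W_pd] .
  have Qn: "Q t \<ge> 0" for t unfolding Q_def QW_def by (rule qn)
  have Qc: "continuous_on UNIV Q" unfolding Q_def QW_def
    by (intro continuous_intros bounded_linear.continuous_on[OF matrix_vector_mul_bounded_linear])
  have hc: "continuous_on UNIV (h c)" if c: "c > 0" for c unfolding h_def
    by (rule fcomp_cont[OF f_cont]) (use c Qn in \<open>auto intro!: continuous_intros Qc\<close>)
  have hm: "h c \<in> borel_measurable lborel" if c: "c > 0" for c
    using borel_measurable_continuous_onI[OF hc[OF c]] by simp
  have hpos: "h c t > 0" if c: "c > 0" for c t unfolding h_def using Qn[of t] c by (intro f_pos) simp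
  have hle0: "h c t \<le> f 0" if c: "c > 0" for c t unfolding h_def using Qn[of t] c by (intro f_noninc) auto
  have Pn: "P t \<ge> 0" for t unfolding P_def by (rule pitheta_nonneg)
  have Pint: "integrable lborel P" unfolding P_def
    by (rule integrableI_bounded) (use pitheta_meas pitheta_dens pitheta_nonneg in auto)
  have P1: "integral\<^sup>L lborel P = 1" unfolding P_def
    using pitheta_meas pitheta_nonneg pitheta_dens by (subst integral_eq_nn_integral) auto
  have PSint: "integrable lborel (\<lambda>t. P t * S t)" unfolding P_def S_def by (rule star_post_wd)
  have PSn: "P t * S t \<ge> 0" for t unfolding S_def using Pn pistar_pos by (simp add: less_imp_le)
  have S0pos: "S0 > 0"
  proof -
    have "S0 \<ge> 0" unfolding S0_def using PSn by (simp add: integral_nonneg)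
    moreover have "S0 \<noteq> 0"
    proof
      assume "S0 = 0"
      hence "AE t in lborel. P t * S t = 0" unfolding S0_def
        using integral_nonneg_eq_0_iff_AE[OF PSint] PSn by simp
      hence "AE t in lborel. ennreal (pitheta t) = 0"
      proof eventually_elim
        case (elim t)
        thus ?case using pistar_pos[of t "Y - X *v t"] by (auto simp: S_def P_def)
      qed
      hence "(\<integral>\<^sup>+ \<theta>. ennreal (pitheta \<theta>) \<partial>lborel) = 0"
        using pitheta_meas by (subst nn_integral_0_iff_AE) auto
      thus False using pitheta_dens by simp
    qed
    ultimately show ?thesis by simp
  qed
  have PHint: "integrable lborel (\<lambda>t. P t * h c t)" if c: "c > 0" for c
  proof (rule Bochner_Integration.integrable_bound[of _ "\<lambda>t. f 0 * P t"])
    show "integrable lborel (\<lambda>t. f 0 * P t)" using Pint by simp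
    show "(\<lambda>t. P t * h c t) \<in> borel_measurable lborel"
      using hm[OF c] Pint by measurable
    show "AE t in lborel. norm (P t * h c t) \<le> norm (f 0 * P t)"
    proof (rule AE_I2)
      fix t
      have "P t * h c t \<le> P t * f 0" using Pn[of t] hle0[OF c, of t] by (rule mult_left_mono[rotated])
      thus "norm (P t * h c t) \<le> norm (f 0 * P t)"
        using Pn[of t] hpos[OF c, of t] f_pos[of 0] by (simp add: abs_mult mult.commute)
    qed
  qed
  have Zpos: "Zc f W c > 0" if c: "c > 0" for c using Zf4[OF c] .
  have mix: "P t * pi_eta_mix f W pistar \<phi> c t (Y - X *v t)
      = (1 - \<phi>) / Zc f W c * (P t * h c t) + \<phi> * (P t * S t)" for c t
    unfolding pi_eta_mix_def pi_eta_def h_def Q_def QW_def S_def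
    by (simp add: algebra_simps)
  have Deq: "(\<integral>t. pitheta t * pi_eta_mix f W pistar \<phi> c t (Y - X *v t) \<partial>lborel)
      = (1 - \<phi>) / Zc f W c * A c + \<phi> * S0" if c: "c > 0" for c
    unfolding P_def[symmetric] mix A_def S0_def
    using PHint[OF c] PSint by simp
  have post: "post_c f W pistar \<phi> pitheta X Y c \<theta>
      = P \<theta> * ((1 - \<phi>) * (h c \<theta> / Zc f W c) + \<phi> * S \<theta>) / ((1 - \<phi>) / Zc f W c * A c + \<phi> * S0)"
    if c: "c > 0" for c \<theta>
    unfolding post_c_def posterior_def Deq[OF c]
    unfolding P_def[symmetric] pi_eta_mix_def pi_eta_def h_def Q_def QW_def S_def
    by simp
  have A_ge: "A c \<ge> 0" if c: "c > 0" for c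
    unfolding A_def using Pn hpos[OF c] by (intro integral_nonneg_AE AE_I2) (simp add: less_imp_le)
  have part1: "\<forall>\<theta>. ((\<lambda>c. post_c f W pistar \<phi> pitheta X Y c \<theta>)
                 \<longlongrightarrow> posterior pitheta pistar X Y \<theta>) (at_right 0)" if J: "JW W X Y > 0"
  proof
    fix \<theta>
    define J' where "J' = JW W X Y"
    have J': "J' > 0" using J J'_def by simp
    have QJ: "J' \<le> Q t" for t unfolding J'_def JW_def Q_def
      by (rule cINF_lower) (auto intro!: bdd_belowI2[where m=0] simp: Qn[unfolded Q_def])
    have hJ: "h c t \<le> f (J' / c)" if c: "c > 0" for c t unfolding h_def
    proof (rule f_noninc)
      show "0 \<le> J' / c" using J' c by simp
      show "J' / c \<le> 1 / c * Q t" using QJ[of t] c by (simp add: divide_right_mono)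
    qed
    define B where "B = (\<lambda>c. f (J' / c) / Zc f W c)"
    have G: "((\<lambda>c. f (J' / c) / sqrt c ^ CARD('k)) \<longlongrightarrow> 0) (at_right 0)"
      by (rule decay_fast[where 'n='k, OF f_noninc f_pos f_int f_tail[of 2] J']) simp_all
    have fKV: "f K * ?V > 0" using f_pos[of K] K by simp
    have B0: "(B \<longlongrightarrow> 0) (at_right 0)"
    proof (rule tendsto_sandwich[of "\<lambda>_. 0" _ _ "\<lambda>c. (1 / (f K * ?V)) * (f (J' / c) / sqrt c ^ CARD('k))"])
      show "eventually (\<lambda>c. 0 \<le> B c) (at_right 0)"
        using eventually_at_right_less[of "0::real"]
      proof eventually_elim
        case (elim c)
        have "0 < f (J' / c)" using J' elim by (intro f_pos) simp
        thus ?case unfolding B_def using Zf4[OF elim] by simp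
      qed
      show "eventually (\<lambda>c. B c \<le> (1 / (f K * ?V)) * (f (J' / c) / sqrt c ^ CARD('k))) (at_right 0)"
        using eventually_at_right_less[of "0::real"]
      proof eventually_elim
        case (elim c)
        have fp: "0 < f (J' / c)" using J' elim by (intro f_pos) simp
        have lo: "f K * ?V * sqrt c ^ CARD('k) \<le> Zc f W c" using Zf3[OF elim] by (simp add: mult.assoc)
        have pp: "0 < f K * ?V * sqrt c ^ CARD('k)" using fKV elim by simp
        have "B c \<le> f (J' / c) / (f K * ?V * sqrt c ^ CARD('k))"
          unfolding B_def using fp lo pp by (intro divide_left_mono) auto
        thus ?case by (simp add: field_simps)
      qed
      show "((\<lambda>_. 0) \<longlongrightarrow> (0::real)) (at_right 0)" by simp
      show "((\<lambda>c. (1 / (f K * ?V)) * (f (J' / c) / sqrt c ^ CARD('k))) \<longlongrightarrow> 0) (at_right 0)"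
        using tendsto_mult_right_zero[OF G, of "1 / (f K * ?V)"] by (simp only:)
    qed
    have E0: "((\<lambda>c. h c \<theta> / Zc f W c) \<longlongrightarrow> 0) (at_right 0)"
    proof (rule tendsto_sandwich[of "\<lambda>_. 0" _ _ B])
      show "eventually (\<lambda>c. 0 \<le> h c \<theta> / Zc f W c) (at_right 0)"
        using eventually_at_right_less[of "0::real"]
        by eventually_elim (use hpos Zf4 in \<open>simp add: less_imp_le\<close>)
      show "eventually (\<lambda>c. h c \<theta> / Zc f W c \<le> B c) (at_right 0)"
        using eventually_at_right_less[of "0::real"]
        by eventually_elim (use hJ Zf4 in \<open>simp add: B_def divide_right_mono less_imp_le\<close>)
    qed (simp_all add: B0)
    have A_le: "A c \<le> f (J' / c)" if c: "c > 0" for c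
    proof -
      have "A c \<le> (\<integral>t. f (J' / c) * P t \<partial>lborel)" unfolding A_def
      proof (rule integral_mono[OF PHint[OF c]])
        show "integrable lborel (\<lambda>t. f (J' / c) * P t)" using Pint by simp
        fix t show "P t * h c t \<le> f (J' / c) * P t"
          using mult_left_mono[OF hJ[OF c, of t] Pn[of t]] by (simp add: mult.commute)
      qed
      also have "\<dots> = f (J' / c)" using P1 by simp
      finally show ?thesis .
    qed
    have AZ0: "((\<lambda>c. A c / Zc f W c) \<longlongrightarrow> 0) (at_right 0)"
    proof (rule tendsto_sandwich[of "\<lambda>_. 0" _ _ B])
      show "eventually (\<lambda>c. 0 \<le> A c / Zc f W c) (at_right 0)"
        using eventually_at_right_less[of "0::real"]
        by eventually_elim (use A_ge Zf4 in \<open>simp add: less_imp_le\<close>)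
      show "eventually (\<lambda>c. A c / Zc f W c \<le> B c) (at_right 0)"
        using eventually_at_right_less[of "0::real"]
        by eventually_elim (use A_le Zf4 in \<open>simp add: B_def divide_right_mono less_imp_le\<close>)
    qed (simp_all add: B0)
    have lim: "((\<lambda>c. P \<theta> * ((1 - \<phi>) * (h c \<theta> / Zc f W c) + \<phi> * S \<theta>) / ((1 - \<phi>) * (A c / Zc f W c) + \<phi> * S0))
        \<longlongrightarrow> P \<theta> * ((1 - \<phi>) * 0 + \<phi> * S \<theta>) / ((1 - \<phi>) * 0 + \<phi> * S0)) (at_right 0)"
      by (intro tendsto_intros E0 AZ0) (use phi S0pos in simp)
    have val: "P \<theta> * ((1 - \<phi>) * 0 + \<phi> * S \<theta>) / ((1 - \<phi>) * 0 + \<phi> * S0) = posterior pitheta pistar X Y \<theta>"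
      unfolding posterior_def using phi by (simp add: P_def S_def S0_def)
    have ev: "eventually (\<lambda>c. P \<theta> * ((1 - \<phi>) * (h c \<theta> / Zc f W c) + \<phi> * S \<theta>) / ((1 - \<phi>) * (A c / Zc f W c) + \<phi> * S0)
        = post_c f W pistar \<phi> pitheta X Y c \<theta>) (at_right 0)"
      using eventually_at_right_less[of "0::real"]
      by eventually_elim (simp add: post)
    show "((\<lambda>c. post_c f W pistar \<phi> pitheta X Y c \<theta>) \<longlongrightarrow> posterior pitheta pistar X Y \<theta>) (at_right 0)"
      using tendsto_cong[OF ev] lim val by simp
  qed
  have part2: "\<forall>\<epsilon>>0. ((\<lambda>c. \<integral>\<theta>. indicator {\<theta>. norm (\<theta> - thetaW W X Y) \<ge> \<epsilon>} \<theta>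
                                * post_c f W pistar \<phi> pitheta X Y c \<theta> \<partial>lborel)
                 \<longlongrightarrow> 0) (at_right 0)"
    if J: "JW W X Y = 0" and Pc: "continuous_on UNIV pitheta" and Pt0: "pitheta (thetaW W X Y) > 0"
  proof (intro allI impI)
    fix \<epsilon> :: real assume eps: "\<epsilon> > 0"
    define t0 where "t0 = thetaW W X Y"
    have injX: "inj ((*v) X)" using X_rank by (simp add: full_rank_injective)
    have Yfit: "Y = X *v t0" unfolding t0_def by (rule J0_fit[OF W_pd injX J])
    define AM where "AM = transpose X ** W ** X"
    have AMpd: "v \<noteq> 0 \<Longrightarrow> v \<bullet> (AM *v v) > 0" for v unfolding AM_def by (rule XWX_pd[OF W_pd injX])
    obtain m where m: "m > 0" "\<And>x. m * (x \<bullet> x) \<le> x \<bullet> (AM *v x)" using quad_lower[of AM] AMpd by blast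
    obtain Mq where Mq: "Mq > 0" "\<And>x. x \<bullet> (AM *v x) \<le> Mq * (x \<bullet> x)" using quad_upper[of AM] by blast
    have Qeq: "Q t = (t0 - t) \<bullet> (AM *v (t0 - t))" for t
    proof -
      have "Y - X *v t = X *v (t0 - t)" unfolding Yfit by (simp add: matrix_vector_mult_diff_distrib)
      thus ?thesis unfolding Q_def QW_def AM_def by (simp add: quadXWX)
    qed
    define p0 where "p0 = P t0 / 2"
    have p0: "p0 > 0" using Pt0 unfolding p0_def P_def t0_def by simp
    obtain \<delta> where \<delta>: "\<delta> > 0" "\<And>t. dist t t0 < \<delta> \<Longrightarrow> dist (P t) (P t0) < p0"
      using Pc p0 unfolding continuous_on_iff P_def by (metis UNIV_I)
    have Pge: "P t \<ge> p0" if "dist t t0 < \<delta>" for t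
      using \<delta>(2)[OF that] unfolding p0_def dist_real_def by linarith
    let ?n = "CARD('k)" and ?pp = "CARD('p)" and ?Vp = "unit_ball_vol (real CARD('p))"
    define C1 where "C1 = (1 - \<phi>) * (?I / (?V * sqrt (m * \<epsilon>^2) ^ ?n)) + \<phi> * S0 * (?I / sqrt l ^ ?n)"
    define L where "L = (1 - \<phi>) * (p0 * f Mq * ?Vp)"
    have Lpos: "L > 0" unfolding L_def using phi p0 f_pos[of Mq] Mq by simp
    define N where "N = (\<lambda>c. \<integral>\<theta>. indicator {\<theta>. norm (\<theta> - thetaW W X Y) \<ge> \<epsilon>} \<theta>
                                * post_c f W pistar \<phi> pitheta X Y c \<theta> \<partial>lborel)"
    have bound: "0 \<le> N c \<and> N c \<le> (C1 / L) * sqrt c ^ (?n - ?pp)" if c: "0 < c" "c < \<delta>^2" for c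
    proof -
      define Z where "Z = Zc f W c"
      have Zp: "Z > 0" unfolding Z_def using Zf4 c by simp
      define D where "D = (1 - \<phi>) / Z * A c + \<phi> * S0"
      have sqc: "sqrt c < \<delta>" using c \<delta>(1) by (metis real_sqrt_abs real_sqrt_less_mono abs_of_pos)
      have Agd: "(p0 * f Mq) * (?Vp * sqrt c ^ ?pp) \<le> A c" unfolding A_def
      proof (rule int_ball_lower[where c=t0])
        fix t assume "t \<in> ball t0 (sqrt c)"
        hence dt: "dist t0 t < sqrt c" by simp
        hence "P t \<ge> p0" using sqc by (intro Pge) (simp add: dist_commute)
        moreover have "h c t \<ge> f Mq"
        proof -
          have "(t0 - t) \<bullet> (t0 - t) = (dist t0 t)^2" by (simp add: dist_norm power2_norm_eq_inner)
          also have "\<dots> \<le> (sqrt c)^2" using dt by (intro power_mono) auto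
          finally have "(t0 - t) \<bullet> (t0 - t) \<le> c" using c by simp
          hence "Q t \<le> Mq * c" unfolding Qeq using Mq by (meson mult_left_mono less_imp_le order_trans)
          hence "1 / c * Q t \<le> Mq" using c by (simp add: divide_le_eq mult.commute)
          thus ?thesis unfolding h_def using Qn[of t] c by (intro f_noninc) auto
        qed
        ultimately show "p0 * f Mq \<le> P t * h c t"
          using p0 f_pos[of Mq] Mq by (intro mult_mono) auto
      qed (use Pn hpos[OF c(1)] p0 f_pos[of Mq] Mq PHint[OF c(1)] c in \<open>auto intro: less_imp_le mult_nonneg_nonneg\<close>)
      have Ag0: "A c \<ge> 0" using A_ge c by simp
      have Dp: "D > 0" unfolding D_def using phi S0pos Zp Ag0 by (intro add_nonneg_pos) auto
      have postc: "post_c f W pistar \<phi> pitheta X Y c \<theta> = P \<theta> * ((1 - \<phi>) * (h c \<theta> / Z) + \<phi> * S \<theta>) / D" for \<theta>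
        unfolding Z_def D_def using post c by simp
      define fe where "fe = f (m * \<epsilon>^2 / c)"
      have fe0: "fe > 0" unfolding fe_def using m eps c by (intro f_pos) simp
      define g where "g = (\<lambda>t. ((1 - \<phi>) * (fe / Z) * P t + \<phi> * (P t * S t)) / D)"
      have gint: "integrable lborel g" unfolding g_def using Pint PSint by simp
      have gint_eq: "integral\<^sup>L lborel g = ((1 - \<phi>) * (fe / Z) + \<phi> * S0) / D"
        unfolding g_def S0_def using Pint PSint P1 by simp
      have gn: "g t \<ge> 0" for t unfolding g_def using phi fe0 Zp Dp Pn[of t] PSn[of t] by simp
      have postn: "post_c f W pistar \<phi> pitheta X Y c t \<ge> 0" for t
      proof -
        have "P t * ((1 - \<phi>) * (h c t / Z)) \<ge> 0" using phi Zp Pn[of t] hpos[OF c(1), of t] by simp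
        moreover have "P t * (\<phi> * S t) \<ge> 0" using phi PSn[of t] by (simp add: mult.left_commute)
        ultimately show ?thesis unfolding postc using Dp by (simp add: distrib_left)
      qed
      have ptw: "indicator {\<theta>. norm (\<theta> - thetaW W X Y) \<ge> \<epsilon>} t * post_c f W pistar \<phi> pitheta X Y c t \<le> g t" for t
      proof (cases "norm (t - t0) \<ge> \<epsilon>")
        case True
        have "m * \<epsilon>^2 \<le> Q t"
        proof -
          have "\<epsilon>^2 \<le> (norm (t0 - t))^2" using True eps by (intro power_mono) (auto simp: norm_minus_commute)
          hence "m * \<epsilon>^2 \<le> m * ((t0 - t) \<bullet> (t0 - t))" using m by (simp add: power2_norm_eq_inner)
          thus ?thesis unfolding Qeq using m(2) by (meson order_trans)
        qed
        hence "h c t \<le> fe" unfolding h_def fe_def using m eps c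
          by (intro f_noninc) (auto simp: divide_right_mono)
        hence "P t * ((1 - \<phi>) * (h c t / Z) + \<phi> * S t) \<le> P t * ((1 - \<phi>) * (fe / Z) + \<phi> * S t)"
          using Pn[of t] phi Zp by (intro mult_left_mono add_right_mono divide_right_mono) auto
        hence "post_c f W pistar \<phi> pitheta X Y c t \<le> g t"
          unfolding postc g_def using Dp by (intro divide_right_mono) (auto simp: algebra_simps)
        thus ?thesis using True t0_def by simp
      next
        case False thus ?thesis using gn t0_def by simp
      qed
      have N_le: "N c \<le> ((1 - \<phi>) * (fe / Z) + \<phi> * S0) / D"
        unfolding N_def gint_eq[symmetric] by (rule integral_mono'[OF gint ptw gn])
      have N_ge: "N c \<ge> 0" unfolding N_def
        using postn by (intro integral_nonneg_AE AE_I2) (simp add: indicator_def)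
      have eqZD: "((1 - \<phi>) * (fe / Z) + \<phi> * S0) / D = ((1 - \<phi>) * fe + \<phi> * S0 * Z) / (Z * D)"
        using Zp Dp by (simp add: field_simps)
      have ZD: "L * sqrt c ^ ?pp \<le> Z * D"
      proof -
        have "Z * D = (1 - \<phi>) * A c + \<phi> * S0 * Z" unfolding D_def using Zp by (simp add: field_simps)
        moreover have "L * sqrt c ^ ?pp \<le> (1 - \<phi>) * A c"
          unfolding L_def using Agd phi by (simp add: mult.assoc mult_left_mono)
        moreover have "\<phi> * S0 * Z \<ge> 0" using phi S0pos Zp by simp
        ultimately show ?thesis by linarith
      qed
      have mpos: "0 < m * \<epsilon>^2 / c" using m(1) eps c(1) by simp
      have fe_le: "fe \<le> (?I / (?V * sqrt (m * \<epsilon>^2) ^ ?n)) * sqrt c ^ ?n"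
      proof -
        have "fe \<le> ?I / (?V * sqrt (m * \<epsilon>^2 / c) ^ ?n)"
          unfolding fe_def by (rule f_decay[where 'n='k, OF f_noninc f_pos f_int mpos])
        also have "sqrt (m * \<epsilon>^2 / c) ^ ?n = sqrt (m * \<epsilon>^2) ^ ?n / sqrt c ^ ?n"
          by (simp add: real_sqrt_divide power_divide)
        finally show ?thesis using c by (simp add: field_simps)
      qed
      have Z_le: "Z \<le> (?I / sqrt l ^ ?n) * sqrt c ^ ?n"
      proof -
        have "Z \<le> sqrt (c / l) ^ ?n * ?I" unfolding Z_def using Zf2 c by simp
        also have "sqrt (c / l) ^ ?n = sqrt c ^ ?n / sqrt l ^ ?n"
          by (simp add: real_sqrt_divide power_divide)
        finally show ?thesis by (simp add: field_simps)
      qed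
      have num_le: "(1 - \<phi>) * fe + \<phi> * S0 * Z \<le> C1 * sqrt c ^ ?n"
      proof -
        have "(1 - \<phi>) * fe \<le> (1 - \<phi>) * ((?I / (?V * sqrt (m * \<epsilon>^2) ^ ?n)) * sqrt c ^ ?n)"
          using fe_le phi by (intro mult_left_mono) auto
        moreover have "\<phi> * S0 * Z \<le> \<phi> * S0 * ((?I / sqrt l ^ ?n) * sqrt c ^ ?n)"
          using Z_le phi S0pos by (intro mult_left_mono) auto
        ultimately show ?thesis unfolding C1_def by (simp add: algebra_simps)
      qed
      have num_ge: "(1 - \<phi>) * fe + \<phi> * S0 * Z \<ge> 0" using phi fe0 S0pos Zp by simp
      have "((1 - \<phi>) * fe + \<phi> * S0 * Z) / (Z * D) \<le> (C1 / L) * sqrt c ^ (?n - ?pp)"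
        by (rule ratio_bound[OF num_ge num_le ZD Lpos _ dims]) (use c in simp)
      thus ?thesis using N_le N_ge eqZD by simp
    qed
    have lim0: "((\<lambda>c. (C1 / L) * sqrt c ^ (?n - ?pp)) \<longlongrightarrow> 0) (at_right 0)"
    proof -
      have "((\<lambda>c::real. sqrt c) \<longlongrightarrow> sqrt 0) (at_right 0)"
        by (intro tendsto_intros tendsto_ident_at)
      hence "((\<lambda>c::real. sqrt c ^ (?n - ?pp)) \<longlongrightarrow> 0 ^ (?n - ?pp)) (at_right 0)"
        by (intro tendsto_intros) simp
      moreover have "(0::real) ^ (?n - ?pp) = 0" using dims by simp
      ultimately have "((\<lambda>c::real. sqrt c ^ (?n - ?pp)) \<longlongrightarrow> 0) (at_right 0)" by (simp only:)
      thus ?thesis by (rule tendsto_mult_right_zero)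
    qed
    have ev: "eventually (\<lambda>c. 0 < c \<and> c < \<delta>^2) (at_right 0)"
      unfolding eventually_at_right_field using \<delta>(1) by (intro exI[of _ "\<delta>^2"]) auto
    show "(N \<longlongrightarrow> 0) (at_right 0)"
    proof (rule tendsto_sandwich[of "\<lambda>_. 0" _ _ "\<lambda>c. (C1 / L) * sqrt c ^ (?n - ?pp)"])
      show "eventually (\<lambda>c. 0 \<le> N c) (at_right 0)" using ev by eventually_elim (use bound in blast)
      show "eventually (\<lambda>c. N c \<le> (C1 / L) * sqrt c ^ (?n - ?pp)) (at_right 0)"
        using ev by eventually_elim (use bound in blast)
      show "((\<lambda>_. 0) \<longlongrightarrow> (0::real)) (at_right 0)" by simp
      show "((\<lambda>c. (C1 / L) * sqrt c ^ (?n - ?pp)) \<longlongrightarrow> 0) (at_right 0)" by (rule lim0)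
    qed
  qed
  show ?thesis using part1 part2 by blast
qed


end
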